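(* For fixed $t\in(0,1)$, the map $q\mapsto M(t;q)$ is increasing on $\mathbb{R}$, and \[ \lim_{q\to-\infty}M(t;q)=t^{1/3},\qquad \lim_{q\to\infty}M(t;q)=1. \]
   Context: For $t\in(0,1)$ and $q\in\mathbb{R}$: $M(t;q)=\left(\frac{8}{15q}+\left(1-\frac{8}{15q}\right)t^q\right)^{5/(15q-8)}$ if $q\ne0,\frac8{15}$; $M(t;0)=\left(1-\frac8{15}\ln t\right)^{-5/8}$; $M(t;\frac8{15})=\exp\frac{5(t^{8/15}-1)}{8}$. *)

theory Defs
  imports "HOL-Analysis.Analysis"
begin

definition M :: "real \<Rightarrow> real \<Rightarrow> real" where
  "M t q = (if q = 0 then (1 - 8/15 * ln t) powr (-5/8)
            else if q = 8/15 then exp (5 * (t powr (8/15) - 1) / 8)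
            else (8/(15*q) + (1 - 8/(15*q)) * t powr q) powr (5/(15*q - 8)))"

end

theory Submission
  imports Defs "HOL-Real_Asymp.Real_Asymp"
begin


lemma expA: fixes z :: real assumes "z > 0" shows "exp (-z) < 1 - z + z^2/2"
proof -
  have "(\<lambda>x. exp x * (1 - x + x^2/2)) 0 < (\<lambda>x. exp x * (1 - x + x^2/2)) z"
  proof (rule DERIV_pos_imp_increasing_open[OF assms])
    fix x :: real assume "0 < x" "x < z"
    show "\<exists>y. DERIV (\<lambda>x. exp x * (1 - x + x^2/2)) x :> y \<and> y > 0"
      by (rule exI[of _ "exp x * x^2/2"]) (use \<open>0<x\<close> in \<open>auto intro!: derivative_eq_intros simp: field_simps power2_eq_square\<close>)
  qed (auto intro!: continuous_intros)
  hence "1 < exp z * (1 - z + z^2/2)" by simp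
  thus ?thesis by (simp add: exp_minus field_simps)
qed

lemma expB: fixes z :: real assumes "z > 0" shows "exp z > 1 + z + z^2/2"
proof -
  have "(\<lambda>x. exp x - (1 + x + x^2/2)) 0 < (\<lambda>x. exp x - (1 + x + x^2/2)) z"
  proof (rule DERIV_pos_imp_increasing_open[OF assms])
    fix x :: real assume "0 < x" "x < z"
    have "1 + x < exp x" using \<open>0<x\<close> exp_lower_Taylor_quadratic[of x]
      by (smt (verit) zero_less_power divide_pos_pos)
    then show "\<exists>y. DERIV (\<lambda>x. exp x - (1 + x + x^2/2)) x :> y \<and> y > 0"
      by (intro exI[of _ "exp x - 1 - x"]) (auto intro!: derivative_eq_intros simp: field_simps power2_eq_square)
  qed (auto intro!: continuous_intros)
  thus ?thesis by simp
qed

lemma expC: fixes z :: real assumes "z > 0" shows "exp z - exp (-z) > 2*z"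
  using expA[OF assms] expB[OF assms] by simp

lemma expT: fixes y :: real assumes "y \<noteq> 0" shows "(y^2 - 2*y + 2 - 2*exp(-y)) / y^3 > 0"
proof (cases "y > 0")
  case True
  with expA[OF True] show ?thesis by (intro divide_pos_pos) auto
next
  case False
  hence "-y > 0" using assms by simp
  from expB[OF this] have "y^2 - 2*y + 2 - 2*exp(-y) < 0" by simp
  moreover have "y^3 < 0" using False assms by (simp add: odd_pos power_less_zero_eq)
  ultimately show ?thesis by (simp add: divide_neg_neg)
qed

lemma expN: fixes y :: real assumes "y \<noteq> 0" shows "(1 - exp(-y))^2 - y^2 * exp(-y) > 0"
proof -
  define z where "z = y/2"
  define u where "u = exp z"
  define v where "v = exp (-z)"
  have uv: "u * v = 1" by (simp add: u_def v_def flip: exp_add)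
  have E: "exp (-y) = v^2" by (simp add: v_def z_def power2_eq_square flip: exp_add)
  have "\<bar>u - v\<bar> > \<bar>2*z\<bar>"
  proof (cases "z > 0")
    case True thus ?thesis using expC[OF True] by (simp add: u_def v_def)
  next
    case False
    hence "-z > 0" using assms by (simp add: z_def)
    from expC[OF this] show ?thesis using False by (simp add: u_def v_def)
  qed
  hence "(u-v)^2 > (2*z)^2" by (metis abs_ge_zero power2_abs power_strict_mono zero_less_numeral pos2)
  moreover have "v > 0" by (simp add: v_def)
  ultimately have "v^2 * (u-v)^2 > v^2 * (2*z)^2" by simp
  moreover have "(1 - v^2)^2 = v^2 * (u-v)^2"
  proof -
    have "1 - v^2 = v * (u - v)" using uv by (simp add: algebra_simps power2_eq_square)
    thus ?thesis by (simp add: power_mult_distrib)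
  qed
  moreover have "y^2 * v^2 = v^2 * (2*z)^2" by (simp add: z_def power2_eq_square)
  ultimately have "(1 - v^2)^2 - y^2 * v^2 > 0" by linarith
  thus ?thesis by (simp add: E)
qed



definition hh :: "real \<Rightarrow> real \<Rightarrow> real" where
  "hh c y = (if y = 0 then 1 + c else exp(-y) + c*(1-exp(-y))/y)"
definition h1 :: "real \<Rightarrow> real \<Rightarrow> real" where
  "h1 c y = -exp(-y) + c*(y*exp(-y) - 1 + exp(-y))/y^2"
definition h2 :: "real \<Rightarrow> real \<Rightarrow> real" where
  "h2 c y = exp(-y) + c*(2 - 2*exp(-y) - 2*y*exp(-y) - y^2*exp(-y))/y^3"
definition Hd :: "real \<Rightarrow> real \<Rightarrow> real" where
  "Hd c y = (if y = 0 then (-1 - c/2)/(1+c) else h1 c y / hh c y)"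

lemma hh_pos: assumes "c > 0" shows "hh c y > 0"
proof (cases "y = 0")
  case True thus ?thesis using assms by (simp add: hh_def)
next
  case False
  have "(1 - exp(-y))/y > 0"
  proof (cases "y > 0")
    case True thus ?thesis by (intro divide_pos_pos) auto
  next
    case False
    hence "y < 0" using \<open>y\<noteq>0\<close> by simp
    thus ?thesis by (intro divide_neg_neg) auto
  qed
  hence "c*((1 - exp(-y))/y) > 0" using assms by (rule mult_pos_pos[rotated])
  thus ?thesis using False exp_gt_zero[of "-y"] unfolding hh_def
    by (smt (verit) times_divide_eq_right)
qed

lemma hh_c: assumes "c > 0" shows "hh c c = 1"
  using assms by (simp add: hh_def)

lemma hh_deriv: assumes "y \<noteq> 0" shows "(hh c has_real_derivative h1 c y) (at y)"
proof (rule has_field_derivative_transform_within_open[of "\<lambda>y. exp(-y) + c*(1-exp(-y))/y" _ _ "-{0}"])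
  show "((\<lambda>y. exp(-y) + c*(1-exp(-y))/y) has_real_derivative h1 c y) (at y)"
    using assms by (auto intro!: derivative_eq_intros simp: h1_def field_simps power2_eq_square)
qed (use assms in \<open>auto simp: hh_def\<close>)

lemma h1_deriv: assumes "y \<noteq> 0" shows "(h1 c has_real_derivative h2 c y) (at y)"
  unfolding h1_def[abs_def]
  using assms by (auto intro!: derivative_eq_intros simp: h2_def field_simps power2_eq_square power3_eq_cube)

lemma key_ident: assumes "y \<noteq> 0"
  shows "hh c y * h2 c y - (h1 c y)^2 = c * exp(-y) * ((y^2 - 2*y + 2 - 2*exp(-y)) / y^3)
           + c^2 * (((1 - exp(-y))^2 - y^2 * exp(-y)) / y^4)"
  using assms by (simp add: hh_def h1_def h2_def field_simps power2_eq_square power3_eq_cube power4_eq_xxxx)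

lemma key_pos: assumes "y \<noteq> 0" "c > 0" shows "hh c y * h2 c y - (h1 c y)^2 > 0"
proof -
  have "c * exp(-y) * ((y^2 - 2*y + 2 - 2*exp(-y)) / y^3) > 0"
    using expT[OF assms(1)] assms by (intro mult_pos_pos) auto
  moreover have "c^2 * (((1 - exp(-y))^2 - y^2 * exp(-y)) / y^4) > 0"
    using expN[OF assms(1)] assms by simp
  ultimately show ?thesis unfolding key_ident[OF assms(1)] by linarith
qed



lemma lim1: "((\<lambda>y::real. (exp(-y) - 1)/y) \<longlongrightarrow> -1) (at 0)" by real_asymp
lemma lim2: "((\<lambda>y::real. ((1 - exp(-y))/y - 1)/y) \<longlongrightarrow> -1/2) (at 0)" by real_asymp
lemma lim3: "((\<lambda>y::real. (y*exp(-y) - 1 + exp (-y))/y^2) \<longlongrightarrow> -1/2) (at 0)" by real_asymp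
lemma lim4: "((\<lambda>y::real. (1 - exp(-y))/y) \<longlongrightarrow> 1) (at 0)" by real_asymp

lemma ev_at0: "(\<And>y. y \<noteq> 0 \<Longrightarrow> f y = g y) \<Longrightarrow> eventually (\<lambda>y. f y = g y) (at (0::real))"
  unfolding eventually_at_filter by (rule always_eventually) auto

lemma hh_deriv0: "(hh c has_real_derivative (-1 + c*(-1/2))) (at 0)"
  unfolding has_field_derivative_iff
proof -
  have "((\<lambda>y. (exp(-y)-1)/y + c*(((1-exp(-y))/y - 1)/y)) \<longlongrightarrow> -1 + c*(-1/2)) (at 0)"
    by (rule tendsto_add[OF lim1 tendsto_mult[OF tendsto_const lim2]])
  moreover have "eventually (\<lambda>y. (exp(-y)-1)/y + c*(((1-exp(-y))/y - 1)/y) = (hh c y - hh c 0)/(y - 0)) (at 0)"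
    by (rule ev_at0) (simp add: hh_def field_simps)
  ultimately show "((\<lambda>y. (hh c y - hh c 0)/(y - 0)) \<longlongrightarrow> -1 + c*(-1/2)) (at 0)"
    by (rule Lim_transform_eventually)
qed

lemma Hd_cont0: assumes "c > 0" shows "isCont (Hd c) 0"
  unfolding isCont_def
proof -
  have "((\<lambda>y. (-exp(-y) + c*((y*exp(-y) - 1 + exp(-y))/y^2)) / (exp(-y) + c*((1-exp(-y))/y)))
        \<longlongrightarrow> (-exp(-0) + c*(-1/2)) / (exp(-0) + c*1)) (at 0)"
    using assms
    by (intro tendsto_divide tendsto_add tendsto_minus tendsto_mult[OF tendsto_const] lim3 lim4 tendsto_exp)
       (auto intro: tendsto_ident_at tendsto_minus)
  moreover have "eventually (\<lambda>y. (-exp(-y) + c*((y*exp(-y) - 1 + exp(-y))/y^2)) / (exp(-y) + c*((1-exp(-y))/y)) = Hd c y) (at 0)"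
    by (rule ev_at0) (simp add: Hd_def hh_def h1_def)
  ultimately have "(Hd c \<longlongrightarrow> (-exp(-0) + c*(-1/2)) / (exp(-0) + c*1)) (at 0)"
    by (rule Lim_transform_eventually)
  moreover have "(-exp(-0) + c*(-1/2)) / (exp(-0) + c*1) = Hd c 0" by (simp add: Hd_def)
  ultimately show "(Hd c \<longlongrightarrow> Hd c 0) (at 0)" by simp
qed

lemma H_deriv: assumes "c > 0" shows "((\<lambda>y. ln (hh c y)) has_real_derivative Hd c y) (at y)"
proof (cases "y = 0")
  case True
  have "((\<lambda>y. ln (hh c y)) has_real_derivative inverse (hh c 0) * (-1 + c*(-1/2))) (at 0)"
    by (rule DERIV_chain2[OF DERIV_ln[OF hh_pos[OF assms]] hh_deriv0])
  moreover have "inverse (hh c 0) * (-1 + c*(-1/2)) = Hd c 0"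
    by (simp add: hh_def Hd_def field_simps)
  ultimately show ?thesis using True by simp
next
  case False
  have "((\<lambda>y. ln (hh c y)) has_real_derivative inverse (hh c y) * h1 c y) (at y)"
    by (rule DERIV_chain2[OF DERIV_ln[OF hh_pos[OF assms]] hh_deriv[OF False]])
  moreover have "inverse (hh c y) * h1 c y = Hd c y"
    using False by (simp add: Hd_def field_simps)
  ultimately show ?thesis by simp
qed

lemma Hd_deriv: assumes "c > 0" "y \<noteq> 0"
  shows "(Hd c has_real_derivative (h2 c y * hh c y - h1 c y * h1 c y) / (hh c y * hh c y)) (at y)"
proof (rule has_field_derivative_transform_within_open[of "\<lambda>y. h1 c y / hh c y" _ _ "-{0}"])
  show "((\<lambda>y. h1 c y / hh c y) has_real_derivative (h2 c y * hh c y - h1 c y * h1 c y) / (hh c y * hh c y)) (at y)"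
    by (rule DERIV_divide[OF h1_deriv[OF assms(2)] hh_deriv[OF assms(2)]]) (use hh_pos[OF assms(1), of y] in linarith)
qed (use assms in \<open>auto simp: Hd_def\<close>)

lemma Hd_deriv_pos: assumes "c > 0" "y \<noteq> 0"
  shows "(h2 c y * hh c y - h1 c y * h1 c y) / (hh c y * hh c y) > 0"
  using key_pos[OF assms(2,1)] hh_pos[OF assms(1), of y]
  by (intro divide_pos_pos) (auto simp: power2_eq_square mult.commute)

lemma Hd_cont: assumes "c > 0" shows "isCont (Hd c) y"
proof (cases "y = 0")
  case True thus ?thesis using Hd_cont0[OF assms] by simp
next
  case False show ?thesis by (rule DERIV_isCont[OF Hd_deriv[OF assms False]])
qed

lemma Hd_mono_aux: assumes "c > 0" "p < q" "0 \<notin> {p<..<q}" shows "Hd c p < Hd c q"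
proof (rule DERIV_pos_imp_increasing_open[OF assms(2)])
  fix x assume "p < x" "x < q"
  hence "x \<noteq> 0" using assms(3) by auto
  thus "\<exists>y. DERIV (Hd c) x :> y \<and> 0 < y"
    using Hd_deriv[OF assms(1)] Hd_deriv_pos[OF assms(1)] by blast
qed (intro continuous_at_imp_continuous_on ballI Hd_cont[OF assms(1)])

lemma Hd_mono: assumes "c > 0" "p < q" shows "Hd c p < Hd c q"
proof (cases "0 \<in> {p<..<q}")
  case True
  hence a: "p < 0" "0 < q" by auto
  have "Hd c p < Hd c 0" by (rule Hd_mono_aux[OF assms(1) a(1)]) simp
  moreover have "Hd c 0 < Hd c q" by (rule Hd_mono_aux[OF assms(1) a(2)]) simp
  ultimately show ?thesis by simp
next
  case False thus ?thesis by (rule Hd_mono_aux[OF assms])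
qed



definition G :: "real \<Rightarrow> real \<Rightarrow> real" where
  "G c y = (if y = c then Hd c c else ln (hh c y) / (y - c))"

lemma G_deriv: assumes "c > 0" "y \<noteq> c"
  shows "(G c has_real_derivative (Hd c y * (y - c) - ln (hh c y) * 1) / ((y - c) * (y - c))) (at y)"
proof (rule has_field_derivative_transform_within_open[of "\<lambda>y. ln (hh c y) / (y - c)" _ _ "-{c}"])
  have d: "((\<lambda>y. y - c) has_real_derivative 1) (at y)" by (auto intro!: derivative_eq_intros)
  show "((\<lambda>y. ln (hh c y) / (y - c)) has_real_derivative (Hd c y * (y - c) - ln (hh c y) * 1) / ((y - c) * (y - c))) (at y)"
    by (rule DERIV_divide[OF H_deriv[OF assms(1)] d]) (use assms in simp)
qed (use assms in \<open>auto simp: G_def\<close>)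

lemma G_deriv_pos: assumes "c > 0" "y \<noteq> c"
  shows "(Hd c y * (y - c) - ln (hh c y) * 1) / ((y - c) * (y - c)) > 0"
proof -
  have Hc: "ln (hh c c) = 0" using hh_c[OF assms(1)] by simp
  have num: "Hd c y * (y - c) - ln (hh c y) > 0"
  proof (cases "y > c")
    case True
    from MVT2[OF True, of "\<lambda>y. ln (hh c y)" "Hd c"] H_deriv[OF assms(1)]
    obtain z where z: "c < z" "z < y" "ln (hh c y) - ln (hh c c) = (y - c) * Hd c z" by blast
    have "(y - c) * (Hd c y - Hd c z) > 0" using Hd_mono[OF assms(1) z(2)] True by simp
    thus ?thesis using z(3) Hc by (simp add: algebra_simps)
  next
    case False
    hence yc: "y < c" using assms(2) by simp
    from MVT2[OF yc, of "\<lambda>y. ln (hh c y)" "Hd c"] H_deriv[OF assms(1)]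
    obtain z where z: "y < z" "z < c" "ln (hh c c) - ln (hh c y) = (c - y) * Hd c z" by blast
    have "(c - y) * (Hd c z - Hd c y) > 0" using Hd_mono[OF assms(1) z(1)] yc by simp
    thus ?thesis using z(3) Hc by (simp add: algebra_simps)
  qed
  have "(y - c) * (y - c) > 0" using assms(2) by (cases "y > c") (auto intro: mult_pos_pos mult_neg_neg)
  with num show ?thesis by simp
qed

lemma G_cont_c: assumes "c > 0" shows "isCont (G c) c"
  unfolding isCont_def
proof -
  have "((\<lambda>y. (ln (hh c y) - ln (hh c c)) / (y - c)) \<longlongrightarrow> Hd c c) (at c)"
    using H_deriv[OF assms, of c] unfolding has_field_derivative_iff .
  moreover have "eventually (\<lambda>y. (ln (hh c y) - ln (hh c c)) / (y - c) = G c y) (at c)"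
    unfolding eventually_at_filter by (rule always_eventually) (auto simp: G_def hh_c[OF assms])
  ultimately have "(G c \<longlongrightarrow> Hd c c) (at c)" by (rule Lim_transform_eventually)
  thus "(G c \<longlongrightarrow> G c c) (at c)" by (simp add: G_def)
qed

lemma G_cont: assumes "c > 0" shows "isCont (G c) y"
proof (cases "y = c")
  case True thus ?thesis using G_cont_c[OF assms] by simp
next
  case False show ?thesis by (rule DERIV_isCont[OF G_deriv[OF assms False]])
qed

lemma G_mono_aux: assumes "c > 0" "p < q" "c \<notin> {p<..<q}" shows "G c p < G c q"
proof (rule DERIV_pos_imp_increasing_open[OF assms(2)])
  fix x assume "p < x" "x < q"
  hence "x \<noteq> c" using assms(3) by auto
  thus "\<exists>y. DERIV (G c) x :> y \<and> 0 < y"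
    using G_deriv[OF assms(1)] G_deriv_pos[OF assms(1)] by blast
qed (intro continuous_at_imp_continuous_on ballI G_cont[OF assms(1)])

lemma G_mono: assumes "c > 0" "p < q" shows "G c p < G c q"
proof (cases "c \<in> {p<..<q}")
  case True
  hence a: "p < c" "c < q" by auto
  have "G c p < G c c" by (rule G_mono_aux[OF assms(1) a(1)]) simp
  moreover have "G c c < G c q" by (rule G_mono_aux[OF assms(1) a(2)]) simp
  ultimately show ?thesis by simp
next
  case False thus ?thesis by (rule G_mono_aux[OF assms])
qed

lemma G_top: assumes "c > 0" shows "(G c \<longlongrightarrow> 0) at_top"
proof -
  have "((\<lambda>y. ln (exp(-y) + c*(1-exp(-y))/y)/(y-c)) \<longlongrightarrow> 0) at_top" using assms by real_asymp
  moreover have "eventually (\<lambda>y. ln (exp(-y) + c*(1-exp(-y))/y)/(y-c) = G c y) at_top"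
    using eventually_gt_at_top[of c] by eventually_elim (use assms in \<open>auto simp: G_def hh_def\<close>)
  ultimately show ?thesis by (rule Lim_transform_eventually)
qed

lemma G_bot: assumes "c > 0" shows "(G c \<longlongrightarrow> -1) at_bot"
proof -
  have "((\<lambda>y. ln (exp(-y) + c*(1-exp(-y))/y)/(y-c)) \<longlongrightarrow> -1) at_bot" using assms by real_asymp
  moreover have "eventually (\<lambda>y. ln (exp(-y) + c*(1-exp(-y))/y)/(y-c) = G c y) at_bot"
    using eventually_gt_at_bot[of 0] by eventually_elim (use assms in \<open>auto simp: G_def hh_def\<close>)
  ultimately show ?thesis by (rule Lim_transform_eventually)
qed

lemma M_rep:
  fixes t q :: real
  assumes t: "0 < t" "t < 1"
  defines "s \<equiv> - ln t"
  defines "c \<equiv> 8/15 * s"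
  shows "M t q = exp (s * G c (s * q) / 3)"
proof -
  have s: "s > 0" using t by (simp add: s_def)
  have c: "c > 0" using s by (simp add: c_def)
  have lnt: "ln t = - s" by (simp add: s_def)
  show ?thesis
  proof (cases "q = 0")
    case True
    have b: "1 - 8/15 * ln t = 1 + c" by (simp add: lnt c_def)
    have "M t q = (1 + c) powr (-5/8)"
      by (simp only: M_def True simp_thms if_True b)
    also have "\<dots> = exp (-5/8 * ln (1 + c))"
      using c by (simp add: powr_def)
    also have "\<dots> = exp (s * G c (s * q) / 3)"
      using True c s by (simp add: G_def hh_def c_def field_simps)
    finally show ?thesis .
  next
    case q0: False
    show ?thesis
    proof (cases "q = 8/15")
      case True
      have sq: "s * q = c" by (simp add: True c_def)
      have tp: "t powr (8/15) = exp (-c)" using t by (simp add: powr_def lnt c_def)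
      have "M t q = exp (5 * (exp (-c) - 1) / 8)" using True by (simp add: M_def tp)
      also have "\<dots> = exp (s * G c (s * q) / 3)"
        using c s unfolding sq by (simp add: G_def Hd_def hh_c h1_def c_def field_simps power2_eq_square)
      finally show ?thesis .
    next
      case False
      have sq0: "s * q \<noteq> 0" using s q0 by simp
      have sqc: "s * q \<noteq> c" using s False by (simp add: c_def)
      have tp: "t powr q = exp (-(s*q))" using t by (simp add: powr_def lnt)
      have B: "8/(15*q) + (1 - 8/(15*q)) * t powr q = hh c (s*q)"
        using sq0 s q0 by (simp add: hh_def tp c_def field_simps)
      have Bpos: "hh c (s*q) > 0" by (rule hh_pos[OF c])
      have "M t q = (8/(15*q) + (1 - 8/(15*q)) * t powr q) powr (5/(15*q - 8))"
        by (simp only: M_def if_not_P[OF q0] if_not_P[OF False])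
      also have "\<dots> = hh c (s*q) powr (5/(15*q - 8))" by (simp only: B)
      also have "\<dots> = exp (5/(15*q - 8) * ln (hh c (s*q)))"
        using Bpos by (simp add: powr_def)
      also have "\<dots> = exp (s * G c (s * q) / 3)"
      proof -
        have "15*q - 8 \<noteq> 0" using False by simp
        moreover have "s*q - c \<noteq> 0" using sqc by simp
        ultimately have "5/(15*q - 8) * ln (hh c (s*q)) = s * (ln (hh c (s*q)) / (s*q - c)) / 3"
          using s by (simp add: c_def field_simps)
        thus ?thesis using sqc by (simp add: G_def)
      qed
      finally show ?thesis .
    qed
  qed
qed

theorem lemma9:
  fixes t :: real
  assumes "0 < t" "t < 1"
  shows "strict_mono (\<lambda>q. M t q)
    \<and> ((\<lambda>q. M t q) \<longlongrightarrow> t powr (1/3)) at_bot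
    \<and> ((\<lambda>q. M t q) \<longlongrightarrow> 1) at_top"
proof -
  define s where "s = - ln t"
  define c where "c = 8/15 * s"
  have s: "s > 0" using assms by (simp add: s_def)
  have c: "c > 0" using s by (simp add: c_def)
  have rep: "(\<lambda>q. M t q) = (\<lambda>q. exp (s * G c (s * q) / 3))"
    using M_rep[OF assms] by (simp add: s_def c_def)
  have mono: "strict_mono (\<lambda>q. M t q)"
    unfolding rep strict_mono_def
  proof (intro allI impI)
    fix x y :: real assume "x < y"
    hence "s * x < s * y" using s by simp
    hence "G c (s*x) < G c (s*y)" by (rule G_mono[OF c])
    hence "s * G c (s*x) < s * G c (s*y)" using s by simp
    thus "exp (s * G c (s * x) / 3) < exp (s * G c (s * y) / 3)" by simp
  qed
  have ft: "filterlim (\<lambda>q. s * q) at_top at_top" using s by real_asymp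
  have fb: "filterlim (\<lambda>q. s * q) at_bot at_bot" using s by real_asymp
  have "((\<lambda>q. G c (s * q)) \<longlongrightarrow> 0) at_top"
    by (rule filterlim_compose[OF G_top[OF c] ft])
  hence "((\<lambda>q. exp (s * G c (s * q) / 3)) \<longlongrightarrow> exp (s * 0 / 3)) at_top"
    by (intro tendsto_intros) auto
  hence top: "((\<lambda>q. M t q) \<longlongrightarrow> 1) at_top" unfolding rep by simp
  have "((\<lambda>q. G c (s * q)) \<longlongrightarrow> -1) at_bot"
    by (rule filterlim_compose[OF G_bot[OF c] fb])
  hence "((\<lambda>q. exp (s * G c (s * q) / 3)) \<longlongrightarrow> exp (s * (-1) / 3)) at_bot"
    by (intro tendsto_intros) auto
  moreover have "exp (s * (-1) / 3) = t powr (1/3)"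
    using assms by (simp add: powr_def s_def)
  ultimately have bot: "((\<lambda>q. M t q) \<longlongrightarrow> t powr (1/3)) at_bot" unfolding rep by simp
  from mono top bot show ?thesis by blast
qed


end
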